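(* Let $K\in\{\mathbb R,\mathbb C,\mathbb H\}$ and let $(E,d)$ be a metric vector space over $K$ such that $d$ is $C_0$-translation invariant and $(C_1,C_2,C_3)$-lipschitz multiplicative. Let $d_0(x,y)=\int_{\mathbb U}d(ux,uy)\,d\mu(u)$ and $\delta_0(x,y)=\lim_{n\to\infty}\frac1n d_0(nx,ny)$. Then every set that is closed (resp. open) for $\delta_0$ is closed (resp. open) for $d$; that is, the topology generated by $d$ is finer than the topology generated by $\delta_0$.
   Context: A metric vector space is a topological vector space over $K$ whose topology is generated by the metric $d$. $\mathbb U=\{u\in K:|u|=1\}$, $\mu$ the right-invariant Haar probability measure on $\mathbb U$. $d$ is $C_0$-translation invariant if $d(x+z,y+z)\le d(x,y)+C_0$ for all $x,y,z$. $(C_1,C_2,C_3)$-lipschitz multiplicative ($C_1\ge1$, $C_2,C_3\ge0$) means $C_1^{-1}|\lambda|d(x,y)-C_2|\lambda|-C_3\le d(\lambda x,\lambda y)\le C_1|\lambda|d(x,y)+C_2|\lambda|+C_3$ for all $\lambda\in K$, $x,y\in E$. (Under these hypotheses the limit defining $\delta_0$ exists.) *)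

theory Defs
  imports "HOL-Analysis.Analysis" "HOL-Probability.Probability"
begin

definition gen_top :: "('e \<Rightarrow> 'e \<Rightarrow> real) \<Rightarrow> 'e topology" where
  "gen_top \<delta> = topology (\<lambda>S. \<forall>x\<in>S. \<exists>r>0. \<forall>y. \<delta> x y < r \<longrightarrow> y \<in> S)"

definition left_vector_space :: "('k::ring_1 \<Rightarrow> 'e::ab_group_add \<Rightarrow> 'e) \<Rightarrow> bool" where
  "left_vector_space sc \<longleftrightarrow>
     (\<forall>a x y. sc a (x + y) = sc a x + sc a y) \<and>
     (\<forall>a b x. sc (a + b) x = sc a x + sc b x) \<and>
     (\<forall>a b x. sc (a * b) x = sc a (sc b x)) \<and>
     (\<forall>x. sc 1 x = x)"

definition metric_vector_space ::
  "('k::real_normed_div_algebra \<Rightarrow> 'e::ab_group_add \<Rightarrow> 'e) \<Rightarrow> ('e \<Rightarrow> 'e \<Rightarrow> real) \<Rightarrow> bool" where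
  "metric_vector_space sc d \<longleftrightarrow>
     left_vector_space sc \<and> Metric_space UNIV d \<and>
     continuous_map (prod_topology (gen_top d) (gen_top d)) (gen_top d) (\<lambda>(x, y). x + y) \<and>
     continuous_map (prod_topology euclidean (gen_top d)) (gen_top d) (\<lambda>(c, x). sc c x)"

definition translation_invariant_C :: "real \<Rightarrow> ('e::ab_group_add \<Rightarrow> 'e \<Rightarrow> real) \<Rightarrow> bool" where
  "translation_invariant_C C0 d \<longleftrightarrow> (\<forall>x y z. d (x + z) (y + z) \<le> d x y + C0)"

definition lipschitz_multiplicative ::
  "real \<Rightarrow> real \<Rightarrow> real \<Rightarrow> ('k::real_normed_div_algebra \<Rightarrow> 'e \<Rightarrow> 'e) \<Rightarrow> ('e \<Rightarrow> 'e \<Rightarrow> real) \<Rightarrow> bool" where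
  "lipschitz_multiplicative C1 C2 C3 sc d \<longleftrightarrow> C1 \<ge> 1 \<and> C2 \<ge> 0 \<and> C3 \<ge> 0 \<and>
     (\<forall>l x y. norm l * d x y / C1 - C2 * norm l - C3 \<le> d (sc l x) (sc l y) \<and>
              d (sc l x) (sc l y) \<le> C1 * norm l * d x y + C2 * norm l + C3)"

definition unit_sphere_K :: "'k::real_normed_div_algebra set" where
  "unit_sphere_K = {u. norm u = 1}"

definition haar_prob_on_unit_sphere :: "'k::real_normed_div_algebra measure \<Rightarrow> bool" where
  "haar_prob_on_unit_sphere \<mu> \<longleftrightarrow>
     prob_space \<mu> \<and> sets \<mu> = sets (restrict_space borel unit_sphere_K) \<and>
     (\<forall>A\<in>sets \<mu>. \<forall>v\<in>unit_sphere_K. emeasure \<mu> ((\<lambda>u. u * v) ` A) = emeasure \<mu> A)"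

definition d0 :: "'k::real_normed_div_algebra measure \<Rightarrow> ('k \<Rightarrow> 'e \<Rightarrow> 'e) \<Rightarrow> ('e \<Rightarrow> 'e \<Rightarrow> real) \<Rightarrow> 'e \<Rightarrow> 'e \<Rightarrow> real" where
  "d0 \<mu> sc d x y = (\<integral>u. d (sc u x) (sc u y) \<partial>\<mu>)"

definition delta0 :: "'k::real_normed_div_algebra measure \<Rightarrow> ('k \<Rightarrow> 'e \<Rightarrow> 'e) \<Rightarrow> ('e \<Rightarrow> 'e \<Rightarrow> real) \<Rightarrow> 'e \<Rightarrow> 'e \<Rightarrow> real" where
  "delta0 \<mu> sc d x y = lim (\<lambda>n. d0 \<mu> sc d (sc (of_nat n) x) (sc (of_nat n) y) / real n)"

end

theory Submission
  imports Defs
begin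

lemma istop_gen: "istopology (\<lambda>S. \<forall>x\<in>S. \<exists>r>0. \<forall>y. (\<delta>::'e\<Rightarrow>'e\<Rightarrow>real) x y < r \<longrightarrow> y \<in> S)"
  unfolding istopology_def
proof (intro conjI allI impI)
  fix S T assume S: "\<forall>x\<in>S. \<exists>r>0. \<forall>y. \<delta> x y < r \<longrightarrow> y \<in> S"
    and T: "\<forall>x\<in>T. \<exists>r>0. \<forall>y. \<delta> x y < r \<longrightarrow> y \<in> T"
  show "\<forall>x\<in>S \<inter> T. \<exists>r>0. \<forall>y. \<delta> x y < r \<longrightarrow> y \<in> S \<inter> T"
  proof
    fix x assume "x \<in> S \<inter> T"
    then obtain r1 r2 where "r1>0" "r2>0" "\<forall>y. \<delta> x y < r1 \<longrightarrow> y \<in> S" "\<forall>y. \<delta> x y < r2 \<longrightarrow> y \<in> T"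
      using S T by blast
    then show "\<exists>r>0. \<forall>y. \<delta> x y < r \<longrightarrow> y \<in> S \<inter> T"
      by (intro exI[of _ "min r1 r2"]) auto
  qed
next
  fix K assume K: "\<forall>S\<in>K. \<forall>x\<in>S. \<exists>r>0. \<forall>y. \<delta> x y < r \<longrightarrow> y \<in> S"
  show "\<forall>x\<in>\<Union> K. \<exists>r>0. \<forall>y. \<delta> x y < r \<longrightarrow> y \<in> \<Union> K"
  proof
    fix x assume "x \<in> \<Union> K"
    then obtain S where "S \<in> K" "x \<in> S" by blast
    then obtain r where "r > 0" "\<forall>y. \<delta> x y < r \<longrightarrow> y \<in> S" using K by blast
    then show "\<exists>r>0. \<forall>y. \<delta> x y < r \<longrightarrow> y \<in> \<Union> K" using \<open>S \<in> K\<close> by blast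
  qed
qed

lemma openin_gen_top: "openin (gen_top \<delta>) S \<longleftrightarrow> (\<forall>x\<in>S. \<exists>r>0. \<forall>y. \<delta> x y < r \<longrightarrow> y \<in> S)"
  unfolding gen_top_def by (simp add: topology_inverse'[OF istop_gen])

lemma topspace_gen_top[simp]: "topspace (gen_top \<delta>) = UNIV"
proof -
  have "openin (gen_top \<delta>) UNIV" unfolding openin_gen_top using zero_less_one by blast
  then show ?thesis by (metis openin_subset subset_antisym subset_UNIV)
qed

lemma gen_top_mtop:
  assumes "Metric_space UNIV d"
  shows "gen_top d = mtopology_of (metric (UNIV, d))"
proof -
  interpret Metric_space UNIV d by fact
  show ?thesis
    unfolding topology_eq
  proof
    fix S
    show "openin (gen_top d) S = openin (mtopology_of (metric (UNIV, d))) S"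
      unfolding openin_gen_top mtopology_of openin_mtopology subset_iff in_mball by (simp add: Ball_def)
  qed
qed

lemma cont_dist:
  assumes "Metric_space UNIV d"
    and "continuous_map X (gen_top d) f" "continuous_map X (gen_top d) g"
  shows "continuous_map X euclidean (\<lambda>x. d (f x) (g x))"
proof -
  interpret Metric_space UNIV d by fact
  show ?thesis using continuous_map_mdist[of X "metric (UNIV,d)" f g] assms
    by (simp add: gen_top_mtop[OF assms(1)])
qed


lemma fekete_core:
  fixes b :: "nat \<Rightarrow> real"
  assumes sub: "\<And>m n. b (m+n) \<le> b m + b n" and nn: "\<And>n. b n \<ge> 0"
  shows "(\<lambda>n. b n / real n) \<longlonglongrightarrow> Inf ((\<lambda>n. b n / real n) ` {1..})"
proof (rule LIMSEQ_I)
  define L where "L = Inf ((\<lambda>n. b n / real n) ` {1..})"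
  have bdd: "bdd_below ((\<lambda>n. b n / real n) ` {1..})"
    by (rule bdd_belowI[of _ 0]) (auto simp: nn)
  have low: "L \<le> b n / n" if "n \<ge> 1" for n
    unfolding L_def by (rule cInf_lower[OF _ bdd]) (use that in auto)
  fix r :: real assume r: "r > 0"
  have "\<exists>x\<in>(\<lambda>n. b n / real n) ` {1..}. x < L + r/2"
    by (rule cInf_lessD) (auto simp: r L_def)
  then obtain k where k: "k \<ge> 1" "b k / k < L + r/2" by auto
  define M where "M = (\<Sum>i<k. b i)"
  have mult: "b (q*k + i) \<le> q * b k + b i" for q i
  proof (induction q)
    case 0 then show ?case by simp
  next
    case (Suc q)
    have "b (Suc q * k + i) = b (k + (q*k+i))" by (simp add: add.assoc)
    also have "\<dots> \<le> b k + b (q*k+i)" by (rule sub)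
    also have "\<dots> \<le> b k + (q * b k + b i)" using Suc by simp
    finally show ?case by (simp add: algebra_simps)
  qed
  have bnd: "b n \<le> n / k * b k + M" for n
  proof -
    have "n = (n div k) * k + n mod k" by simp
    then have "b n \<le> real (n div k) * b k + b (n mod k)" using mult by metis
    also have "real (n div k) * b k \<le> n / k * b k"
      by (rule mult_right_mono[OF of_nat_div_le_of_nat nn])
    also have "b (n mod k) \<le> M" unfolding M_def
      by (rule member_le_sum) (use k(1) nn in auto)
    finally show ?thesis by simp
  qed
  have M0: "M \<ge> 0" unfolding M_def by (simp add: nn sum_nonneg)
  obtain no :: nat where no: "no \<ge> 1" "real no > 2*M/r"
    using reals_Archimedean2[of "2*M/r"] by (metis le_less_linear less_trans nat_le_linear of_nat_1 of_nat_le_iff not_one_le_zero) 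
  show "\<exists>no. \<forall>n\<ge>no. norm (b n / real n - L) < r"
  proof (intro exI allI impI)
    fix n assume "no \<le> n"
    with no have n1: "n \<ge> 1" and nM: "real n > 2*M/r" by auto
    have npos: "real n > 0" using n1 by simp
    have "b n / n \<le> (n / k * b k + M) / n" by (rule divide_right_mono[OF bnd]) simp
    also have "\<dots> = b k / k + M / n" using npos by (simp add: field_simps)
    also have "M / n < r/2" using nM r npos by (simp add: field_simps)
    finally have "b n / n < L + r" using k by linarith
    moreover have "L \<le> b n / n" by (rule low[OF n1])
    ultimately show "norm (b n / real n - L) < r" by simp
  qed
qed

lemma fekete:
  fixes a :: "nat \<Rightarrow> real"
  assumes sub: "\<And>m n. a (m+n) \<le> a m + a n + c" and nn: "\<And>n. a n \<ge> 0" and c: "c \<ge> 0"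
  shows "convergent (\<lambda>n. a n / real n)"
proof -
  have "(\<lambda>n. (a n + c) / real n) \<longlonglongrightarrow> Inf ((\<lambda>n. (a n + c) / real n) ` {1..})"
    by (rule fekete_core) (use sub nn c in \<open>auto simp: algebra_simps intro: add_nonneg_nonneg\<close>)
  moreover have "(\<lambda>n. c / real n) \<longlonglongrightarrow> 0" by (rule lim_const_over_n)
  ultimately have "(\<lambda>n. (a n + c) / real n - c / real n) \<longlonglongrightarrow> Inf ((\<lambda>n. (a n + c) / real n) ` {1..}) - 0"
    by (rule tendsto_diff)
  moreover have "(\<lambda>n. (a n + c) / real n - c / real n) = (\<lambda>n. a n / real n)"
    by (simp add: add_divide_distrib)
  ultimately show ?thesis unfolding convergent_def by auto
qed


theorem lemma5:
  fixes sc :: "'k::real_normed_div_algebra \<Rightarrow> 'e::ab_group_add \<Rightarrow> 'e"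
    and d :: "'e \<Rightarrow> 'e \<Rightarrow> real"
    and \<mu> :: "'k measure"
  assumes "metric_vector_space sc d"
    and "translation_invariant_C C0 d"
    and "lipschitz_multiplicative C1 C2 C3 sc d"
    and "haar_prob_on_unit_sphere \<mu>"
  shows "(\<forall>S. closedin (gen_top (delta0 \<mu> sc d)) S \<longrightarrow> closedin (gen_top d) S) \<and>
         (\<forall>S. openin (gen_top (delta0 \<mu> sc d)) S \<longrightarrow> openin (gen_top d) S)"
proof -
  have LV: "left_vector_space sc" and MS: "Metric_space UNIV d"
    and cadd: "continuous_map (prod_topology (gen_top d) (gen_top d)) (gen_top d) (\<lambda>(x, y). x + y)"
    and cmul: "continuous_map (prod_topology euclidean (gen_top d)) (gen_top d) (\<lambda>(c, x). sc c x)"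
    using assms(1) unfolding metric_vector_space_def by auto
  interpret M: Metric_space UNIV d by (fact MS)
  have TI: "\<And>x y z. d (x + z) (y + z) \<le> d x y + C0"
    using assms(2) unfolding translation_invariant_C_def by blast
  have C1: "C1 \<ge> 1" and C2: "C2 \<ge> 0" and C3: "C3 \<ge> 0"
    and LM: "\<And>l x y. d (sc l x) (sc l y) \<le> C1 * norm l * d x y + C2 * norm l + C3"
    using assms(3) unfolding lipschitz_multiplicative_def by auto
  have C0: "C0 \<ge> 0" using TI[of 0 0 0] by simp
  have PS: "prob_space \<mu>" and setsmu: "sets \<mu> = sets (restrict_space borel unit_sphere_K)"
    using assms(4) unfolding haar_prob_on_unit_sphere_def by auto
  interpret P: prob_space \<mu> by (fact PS)
  have sp: "space \<mu> = unit_sphere_K"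
    using sets_eq_imp_space_eq[OF setsmu] by (simp add: space_restrict_space)
  have sc_add: "\<And>a x y. sc a (x + y) = sc a x + sc a y"
    and sc_addl: "\<And>a b x. sc (a + b) x = sc a x + sc b x"
    and sc_mult: "\<And>a b x. sc (a * b) x = sc a (sc b x)"
    using LV unfolding left_vector_space_def by auto
  have sc_0: "\<And>a. sc a 0 = 0"
    using sc_add[of _ 0 0] by simp
  have intc: "\<And>c. (\<integral>u. c \<partial>\<mu>) = (c::real)"
    by (simp add: P.prob_space)
  have cont1: "continuous_map euclidean (gen_top d) (\<lambda>u. sc u a)" for a
  proof -
    have "continuous_map euclidean (prod_topology euclidean (gen_top d)) (\<lambda>u. (u, a))"
      by (intro continuous_map_pairedI) auto
    then have "continuous_map euclidean (gen_top d) ((\<lambda>(c, x). sc c x) \<circ> (\<lambda>u. (u, a)))"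
      by (rule continuous_map_compose[OF _ cmul])
    then show ?thesis by (simp add: o_def)
  qed
  have integ: "integrable \<mu> (\<lambda>u. d (sc u a) (sc u b))" for a b
  proof -
    have "continuous_map euclidean euclidean (\<lambda>u. d (sc u a) (sc u b))"
      by (rule cont_dist[OF MS cont1 cont1])
    then have "continuous_on UNIV (\<lambda>u. d (sc u a) (sc u b))"
      using continuous_map_iff_continuous[of UNIV "\<lambda>u. d (sc u a) (sc u b)"] by simp
    then have "(\<lambda>u. d (sc u a) (sc u b)) \<in> borel_measurable borel"
      by (rule borel_measurable_continuous_onI)
    then have "(\<lambda>u. d (sc u a) (sc u b)) \<in> borel_measurable (restrict_space borel unit_sphere_K)"
      by (rule measurable_restrict_space1)
    then have meas: "(\<lambda>u. d (sc u a) (sc u b)) \<in> borel_measurable \<mu>"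
      unfolding measurable_cong_sets[OF setsmu refl, of borel] .
    have "AE u in \<mu>. norm (d (sc u a) (sc u b)) \<le> C1 * d a b + C2 + C3"
    proof (rule AE_I2)
      fix u assume "u \<in> space \<mu>"
      then have "norm u = 1" by (simp add: sp unit_sphere_K_def)
      then show "norm (d (sc u a) (sc u b)) \<le> C1 * d a b + C2 + C3"
        using LM[of u a b] by simp
    qed
    then show ?thesis by (rule P.integrable_const_bound[OF _ meas])
  qed
  have d0nn: "d0 \<mu> sc d a b \<ge> 0" for a b
    unfolding d0_def by (rule integral_nonneg_AE) simp
  have conv: "convergent (\<lambda>n. d0 \<mu> sc d (sc (of_nat n) x) (sc (of_nat n) y) / real n)" for x y
  proof (rule fekete[where c = "2*C0"])
    show "0 \<le> 2 * C0" using C0 by simp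
    show "0 \<le> d0 \<mu> sc d (sc (of_nat n) x) (sc (of_nat n) y)" for n by (rule d0nn)
    fix m n :: nat
    let ?f = "\<lambda>k u. d (sc u (sc (of_nat k) x)) (sc u (sc (of_nat k) y))"
    have pw: "?f (m+n) u \<le> ?f m u + ?f n u + 2*C0" for u
    proof -
      have eq: "sc u (sc (of_nat (m+n)) z) = sc u (sc (of_nat m) z) + sc u (sc (of_nat n) z)" for z
        by (simp add: sc_addl sc_add)
      define A where "A = sc u (sc (of_nat m) x)"
      define B where "B = sc u (sc (of_nat n) x)"
      define C where "C = sc u (sc (of_nat m) y)"
      define D where "D = sc u (sc (of_nat n) y)"
      have "d (A + B) (C + D) \<le> d (A + B) (C + B) + d (C + B) (C + D)"
        by (rule M.triangle) auto
      also have "d (A + B) (C + B) \<le> d A C + C0" by (rule TI)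
      also have "d (C + B) (C + D) = d (B + C) (D + C)" by (simp add: add.commute)
      also have "\<dots> \<le> d B D + C0" by (rule TI)
      finally have "d (A + B) (C + D) \<le> d A C + d B D + 2 * C0" by simp
      then show ?thesis unfolding eq A_def B_def C_def D_def by simp
    qed
    have "(\<integral>u. ?f (m+n) u \<partial>\<mu>) \<le> (\<integral>u. ?f m u + ?f n u + 2*C0 \<partial>\<mu>)"
      by (rule integral_mono) (use integ pw in auto)
    also have "\<dots> = (\<integral>u. ?f m u \<partial>\<mu>) + (\<integral>u. ?f n u \<partial>\<mu>) + 2*C0"
      using integ by (simp add: intc P.prob_space)
    finally show "d0 \<mu> sc d (sc (of_nat (m + n)) x) (sc (of_nat (m + n)) y)
        \<le> d0 \<mu> sc d (sc (of_nat m) x) (sc (of_nat m) y) + d0 \<mu> sc d (sc (of_nat n) x) (sc (of_nat n) y) + 2 * C0"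
      unfolding d0_def .
  qed
  have key: "openin (gen_top d) S" if HS0: "openin (gen_top (delta0 \<mu> sc d)) S" for S
  proof -
    have HS: "\<forall>x\<in>S. \<exists>r>0. \<forall>y. delta0 \<mu> sc d x y < r \<longrightarrow> y \<in> S"
      using HS0 by (simp add: openin_gen_top)
    show ?thesis unfolding openin_gen_top
    proof
      fix x assume "x \<in> S"
      then obtain r where r: "r > 0" "\<forall>y. delta0 \<mu> sc d x y < r \<longrightarrow> y \<in> S" using HS by blast
      obtain m0 :: nat where m0: "(C1 + C2) / r < real m0" using reals_Archimedean2 by blast
      define m where "m = max 1 m0"
      have m1: "m \<ge> 1" unfolding m_def by simp
      have mr: "(C1 + C2) / m < r"
      proof -
        have "(C1 + C2) / r < real m" using m0 unfolding m_def by linarith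
        then show ?thesis using r m1 by (simp add: field_simps)
      qed
      have cshift: "continuous_map (gen_top d) (gen_top d) (\<lambda>y. y + - x)"
      proof -
        have "continuous_map (gen_top d) (prod_topology (gen_top d) (gen_top d)) (\<lambda>y. (y, - x))"
          by (intro continuous_map_pairedI) auto
        then have "continuous_map (gen_top d) (gen_top d) ((\<lambda>(x, y). x + y) \<circ> (\<lambda>y. (y, - x)))"
          by (rule continuous_map_compose[OF _ cadd])
        then show ?thesis by (simp add: o_def)
      qed
      have cscal: "continuous_map (gen_top d) (gen_top d) (\<lambda>z. sc (of_nat m) z)"
      proof -
        have "continuous_map (gen_top d) (prod_topology euclidean (gen_top d)) (\<lambda>z. (of_nat m :: 'k, z))"
          by (intro continuous_map_pairedI) auto
        then have "continuous_map (gen_top d) (gen_top d) ((\<lambda>(c, x). sc c x) \<circ> (\<lambda>z. (of_nat m :: 'k, z)))"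
          by (rule continuous_map_compose[OF _ cmul])
        then show ?thesis by (simp add: o_def)
      qed
      have cg: "continuous_map (gen_top d) (gen_top d) (\<lambda>y. sc (of_nat m) (y + - x))"
        using continuous_map_compose[OF cshift cscal] by (simp add: o_def)
      have ball: "openin (gen_top d) {z. d 0 z < 1}"
        unfolding openin_gen_top
      proof (intro ballI)
        fix z assume "z \<in> {z. d 0 z < 1}"
        then have z: "d 0 z < 1" by simp
        show "\<exists>r>0. \<forall>y. d z y < r \<longrightarrow> y \<in> {z. d 0 z < 1}"
        proof (intro exI[of _ "1 - d 0 z"] conjI allI impI)
          show "0 < 1 - d 0 z" using z by simp
          fix w assume "d z w < 1 - d 0 z"
          moreover have "d 0 w \<le> d 0 z + d z w" by (rule M.triangle) auto
          ultimately show "w \<in> {z. d 0 z < 1}" by simp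
        qed
      qed
      have "openin (gen_top d) {y \<in> topspace (gen_top d). sc (of_nat m) (y + - x) \<in> {z. d 0 z < 1}}"
        by (rule openin_continuous_map_preimage[OF cg ball])
      moreover have "x \<in> {y \<in> topspace (gen_top d). sc (of_nat m) (y + - x) \<in> {z. d 0 z < 1}}"
        by (simp add: sc_0)
      ultimately have "\<exists>r>0. \<forall>y. d x y < r \<longrightarrow> y \<in> {y \<in> topspace (gen_top d). sc (of_nat m) (y + - x) \<in> {z. d 0 z < 1}}"
        unfolding openin_gen_top by (rule bspec)
      then obtain s where s: "s > 0" "\<forall>y. d x y < s \<longrightarrow> d 0 (sc (of_nat m) (y + - x)) < 1"
        by auto
      show "\<exists>s>0. \<forall>y. d x y < s \<longrightarrow> y \<in> S"
      proof (intro exI[of _ s] conjI allI impI)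
        show "s > 0" by fact
        fix y assume "d x y < s"
        define h where "h = y + - x"
        have hm: "d 0 (sc (of_nat m) h) < 1" using s \<open>d x y < s\<close> unfolding h_def by blast
        have yeq: "y = x + h" unfolding h_def by simp
        have bnd: "d0 \<mu> sc d (sc (of_nat n) x) (sc (of_nat n) y) / real n
            \<le> (C1 + C2) / m + (C3 + C0) / n" if n1: "n \<ge> 1" for n
        proof -
          let ?B = "real n / real m * (C1 + C2) + C3 + C0"
          have pw: "d (sc u (sc (of_nat n) x)) (sc u (sc (of_nat n) y)) \<le> ?B" if "u \<in> space \<mu>" for u
          proof -
            have nu: "norm u = 1" using that by (simp add: sp unit_sphere_K_def)
            define A where "A = sc u (sc (of_nat n) x)"
            define B where "B = sc u (sc (of_nat n) h)"
            define l where "l = u * of_nat n / (of_nat m :: 'k)"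
            have mnz: "(of_nat m :: 'k) \<noteq> 0" using m1 by simp
            have nl: "norm l = real n / real m"
              unfolding l_def by (simp add: divide_inverse norm_mult norm_inverse nu)
            have lm: "l * of_nat m = u * of_nat n" unfolding l_def using mnz by (simp add: divide_inverse mult.assoc left_inverse)
            have "B = sc (u * of_nat n) h" by (simp add: B_def sc_mult)
            also have "\<dots> = sc (l * of_nat m) h" by (simp only: lm)
            also have "\<dots> = sc l (sc (of_nat m) h)" by (rule sc_mult)
            finally have Beq: "B = sc l (sc (of_nat m) h)" .
            have "sc u (sc (of_nat n) y) = A + B" unfolding A_def B_def yeq by (simp add: sc_add)
            then have "d (sc u (sc (of_nat n) x)) (sc u (sc (of_nat n) y)) = d (0 + A) (B + A)"
              by (simp add: A_def add.commute)
            also have "\<dots> \<le> d 0 B + C0" by (rule TI)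
            also have "d 0 B = d (sc l 0) (sc l (sc (of_nat m) h))" by (simp add: Beq sc_0)
            also have "\<dots> \<le> C1 * norm l * d 0 (sc (of_nat m) h) + C2 * norm l + C3" by (rule LM)
            also have "C1 * norm l * d 0 (sc (of_nat m) h) \<le> C1 * norm l * 1"
              by (rule mult_left_mono) (use hm C1 in auto)
            finally show ?thesis unfolding nl by (simp add: algebra_simps add_divide_distrib)
          qed
          have "d0 \<mu> sc d (sc (of_nat n) x) (sc (of_nat n) y) \<le> (\<integral>u. ?B \<partial>\<mu>)"
            unfolding d0_def by (rule integral_mono) (use integ pw in auto)
          also have "\<dots> = ?B" by (rule intc)
          finally have "d0 \<mu> sc d (sc (of_nat n) x) (sc (of_nat n) y) / real n \<le> ?B / real n"
            by (rule divide_right_mono) simp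
          also have "?B / real n = (C1 + C2) / m + (C3 + C0) / n"
            using n1 by (simp add: field_simps)
          finally show ?thesis .
        qed
        have lim1: "(\<lambda>n. d0 \<mu> sc d (sc (of_nat n) x) (sc (of_nat n) y) / real n) \<longlonglongrightarrow> delta0 \<mu> sc d x y"
          unfolding delta0_def using conv[of x y] by (simp add: convergent_LIMSEQ_iff)
        have lim2: "(\<lambda>n. (C1 + C2) / m + (C3 + C0) / real n) \<longlonglongrightarrow> (C1 + C2) / m + 0"
          by (intro tendsto_add tendsto_const lim_const_over_n)
        have "delta0 \<mu> sc d x y \<le> (C1 + C2) / m + 0"
          by (rule LIMSEQ_le[OF lim1 lim2]) (use bnd in auto)
        then show "y \<in> S" using r mr by simp
      qed
    qed
  qed
  show ?thesis
  proof (intro conjI allI impI)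
    fix S assume "openin (gen_top (delta0 \<mu> sc d)) S"
    then show "openin (gen_top d) S" by (rule key)
  next
    fix S assume "closedin (gen_top (delta0 \<mu> sc d)) S"
    then have "openin (gen_top (delta0 \<mu> sc d)) (UNIV - S)" by (simp add: closedin_def)
    then have "openin (gen_top d) (UNIV - S)" by (rule key)
    then show "closedin (gen_top d) S" by (simp add: closedin_def)
  qed
qed

end
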